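(* For every positive integer $n$, the class $\mathcal K_n^*$ has the expansion property relative to the class $\mathcal K_n$.
   Context: Expansion property: let $L\subseteq L^*$ be relational languages, $\mathcal K$ a class of finite $L$-structures and $\mathcal K^*$ a class of finite $L^*$-structures whose $L$-reducts lie in $\mathcal K$. $\mathcal K^*$ has the expansion property relative to $\mathcal K$ if for every $\mathbf A\in\mathcal K$ there is $\mathbf B\in\mathcal K$ such that for all $\mathbf A^*,\mathbf B^*\in\mathcal K^*$ whose $L$-reducts are $\mathbf A$ and $\mathbf B$ respectively, $\mathbf A^*$ embeds into $\mathbf B^*$. A directed graph $(A,E)$ ($E$ irreflexive and asymmetric) is complete multipartite if the relation "$u=v$, or neither $E(u,v)$ nor $E(v,u)$" is an equivalence relation on $A$; its classes are called the parts. $\mathcal K_n$ is the class of finite complete multipartite directed graphs with at most $n$ parts (the age of the generic complete $n$-partite directed graph $n*I_\omega$). $\mathcal K_n^*$ is the class of finite structures $(A,E,P_0,\dots,P_{n-1},<)$ such that $(A,E)\in\mathcal K_n$, $P_0,\dots,P_{n-1}$ are pairwise disjoint subsets of $A$ each of which is either empty or a part, every part equals some $P_i$, and $<$ is a linear order on $A$ such that every element of $P_i$ is below every element of $P_j$ whenever $i<j$. *)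

theory Defs
  imports Main
begin

text \<open>Finite structures are represented on the carrier type nat (every finite structure
is isomorphic to one on nat, and all notions below are isomorphism invariant).
A digraph structure is (A, E) with E a set of pairs; an expanded structure is
(A, E, P, R) with P i the interpretation of the unary predicate P_i (only i < n
is used) and R the strict linear order.\<close>

type_synonym dg = "nat set \<times> (nat \<times> nat) set"
type_synonym odg = "nat set \<times> (nat \<times> nat) set \<times> (nat \<Rightarrow> nat set) \<times> (nat \<times> nat) set"

definition expansion_property ::
  "('s \<Rightarrow> bool) \<Rightarrow> ('t \<Rightarrow> bool) \<Rightarrow> ('t \<Rightarrow> 's) \<Rightarrow> ('t \<Rightarrow> 't \<Rightarrow> bool) \<Rightarrow> bool" where
  "expansion_property K Ks red emb \<longleftrightarrow>
     (\<forall>A. K A \<longrightarrow> (\<exists>B. K B \<and>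
        (\<forall>As Bs. Ks As \<longrightarrow> Ks Bs \<longrightarrow> red As = A \<longrightarrow> red Bs = B \<longrightarrow> emb As Bs)))"

definition nonadj :: "(nat \<times> nat) set \<Rightarrow> nat \<Rightarrow> nat \<Rightarrow> bool" where
  "nonadj E u v \<longleftrightarrow> u = v \<or> ((u, v) \<notin> E \<and> (v, u) \<notin> E)"

definition directed_graph :: "dg \<Rightarrow> bool" where
  "directed_graph G \<longleftrightarrow> (case G of (A, E) \<Rightarrow>
     E \<subseteq> A \<times> A \<and> (\<forall>x. (x, x) \<notin> E) \<and> (\<forall>x y. (x, y) \<in> E \<longrightarrow> (y, x) \<notin> E))"

definition complete_multipartite :: "dg \<Rightarrow> bool" where
  "complete_multipartite G \<longleftrightarrow> directed_graph G \<and>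
     (case G of (A, E) \<Rightarrow> equiv A {(u, v). u \<in> A \<and> v \<in> A \<and> nonadj E u v})"

definition parts :: "dg \<Rightarrow> nat set set" where
  "parts G = (case G of (A, E) \<Rightarrow> A // {(u, v). u \<in> A \<and> v \<in> A \<and> nonadj E u v})"

definition K :: "nat \<Rightarrow> dg \<Rightarrow> bool" where
  "K n G \<longleftrightarrow> finite (fst G) \<and> complete_multipartite G \<and> card (parts G) \<le> n"

definition reduct :: "odg \<Rightarrow> dg" where
  "reduct S = (case S of (A, E, P, R) \<Rightarrow> (A, E))"

definition Kstar :: "nat \<Rightarrow> odg \<Rightarrow> bool" where
  "Kstar n S \<longleftrightarrow> (case S of (A, E, P, R) \<Rightarrow>
     K n (A, E) \<and>
     (\<forall>i<n. P i \<subseteq> A) \<and>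
     (\<forall>i<n. \<forall>j<n. i \<noteq> j \<longrightarrow> P i \<inter> P j = {}) \<and>
     (\<forall>i<n. P i = {} \<or> P i \<in> parts (A, E)) \<and>
     (\<forall>X \<in> parts (A, E). \<exists>i<n. X = P i) \<and>
     R \<subseteq> A \<times> A \<and> strict_linear_order_on A R \<and>
     (\<forall>i<n. \<forall>j<n. i < j \<longrightarrow> (\<forall>x \<in> P i. \<forall>y \<in> P j. (x, y) \<in> R)))"

definition embeds :: "nat \<Rightarrow> odg \<Rightarrow> odg \<Rightarrow> bool" where
  "embeds n S T \<longleftrightarrow> (case S of (A, E, P, R) \<Rightarrow> case T of (B, F, Q, U) \<Rightarrow>
     (\<exists>f. inj_on f A \<and> f ` A \<subseteq> B \<and>
       (\<forall>x\<in>A. \<forall>y\<in>A. ((x, y) \<in> E \<longleftrightarrow> (f x, f y) \<in> F)) \<and>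
       (\<forall>x\<in>A. \<forall>y\<in>A. ((x, y) \<in> R \<longleftrightarrow> (f x, f y) \<in> U)) \<and>
       (\<forall>i<n. \<forall>x\<in>A. (x \<in> P i \<longleftrightarrow> f x \<in> Q i))))"

end

theory Submission
  imports Defs "HOL-Library.Ramsey"
begin

lemma sl_image:
  fixes g :: "nat \<Rightarrow> nat"
  assumes "\<And>i j. i < j \<Longrightarrow> j < k \<Longrightarrow> g i < g j"
  shows "sorted_list_of_set (g ` {..<k}) = map g [0..<k]"
proof -
  have inj: "inj_on g {..<k}"
    by (metis assms inj_onI lessThan_iff linorder_neqE_nat order_less_irrefl)
  have "sorted_wrt (<) (map g [0..<k])"
    unfolding sorted_wrt_map using assms by (auto simp: sorted_wrt_iff_nth_less)
  moreover have "set (map g [0..<k]) = g ` {..<k}" by auto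
  moreover have "length (map g [0..<k]) = card (g ` {..<k})"
    using card_image[OF inj] by simp
  ultimately show ?thesis
    using sorted_list_of_set_unique[of "g ` {..<k}" "map g [0..<k]"] by (simp add: atLeast0LessThan)
qed

lemma sl_image_inj:
  fixes g :: "nat \<Rightarrow> nat"
  assumes "\<And>i j. i < j \<Longrightarrow> j < k \<Longrightarrow> g i < g j"
  shows "inj_on g {..<k}"
  by (metis assms inj_onI lessThan_iff linorder_neqE_nat order_less_irrefl)

definition labf :: "(nat \<Rightarrow> nat set) \<Rightarrow> nat \<Rightarrow> nat \<Rightarrow> nat" where
  "labf P n z = (THE i. i < n \<and> z \<in> P i)"

lemma kstar_facts:
  assumes "Kstar n (A, E, P, R)"
  shows kstar_fin: "finite A"
    and kstar_lab: "\<And>z. z \<in> A \<Longrightarrow> labf P n z < n \<and> z \<in> P (labf P n z)"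
    and kstar_labP: "\<And>z i. z \<in> A \<Longrightarrow> i < n \<Longrightarrow> z \<in> P i \<longleftrightarrow> labf P n z = i"
    and kstar_same: "\<And>x y. x \<in> A \<Longrightarrow> y \<in> A \<Longrightarrow> labf P n x = labf P n y \<Longrightarrow> (x, y) \<notin> E"
    and kstar_diff: "\<And>x y. x \<in> A \<Longrightarrow> y \<in> A \<Longrightarrow> labf P n x \<noteq> labf P n y \<Longrightarrow> x \<noteq> y \<and> ((x, y) \<in> E \<longleftrightarrow> (y, x) \<notin> E)"
    and kstar_Rlab: "\<And>x y. x \<in> A \<Longrightarrow> y \<in> A \<Longrightarrow> labf P n x \<noteq> labf P n y \<Longrightarrow> (x, y) \<in> R \<longleftrightarrow> labf P n x < labf P n y"
    and kstar_Rirr: "\<And>x. (x, x) \<notin> R"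
    and kstar_Rtrans: "\<And>x y z. (x, y) \<in> R \<Longrightarrow> (y, z) \<in> R \<Longrightarrow> (x, z) \<in> R"
    and kstar_Rtot: "\<And>x y. x \<in> A \<Longrightarrow> y \<in> A \<Longrightarrow> x \<noteq> y \<Longrightarrow> (x, y) \<in> R \<or> (y, x) \<in> R"
    and kstar_RA: "R \<subseteq> A \<times> A"
proof -
  define rel where "rel = {(u, v). u \<in> A \<and> v \<in> A \<and> nonadj E u v}"
  have KA: "K n (A, E)" and Psub: "\<forall>i<n. P i \<subseteq> A"
    and disj: "\<forall>i<n. \<forall>j<n. i \<noteq> j \<longrightarrow> P i \<inter> P j = {}"
    and Ppart: "\<forall>i<n. P i = {} \<or> P i \<in> parts (A, E)"
    and partP: "\<forall>X \<in> parts (A, E). \<exists>i<n. X = P i"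
    and RA: "R \<subseteq> A \<times> A" and slo: "strict_linear_order_on A R"
    and Rord: "\<forall>i<n. \<forall>j<n. i < j \<longrightarrow> (\<forall>x \<in> P i. \<forall>y \<in> P j. (x, y) \<in> R)"
    using assms unfolding Kstar_def by auto
  show "finite A" using KA unfolding K_def by simp
  have eq: "equiv A rel" and dg: "directed_graph (A, E)"
    using KA unfolding K_def complete_multipartite_def rel_def by auto
  have noloop: "\<And>x. (x, x) \<notin> E" and asym: "\<And>x y. (x, y) \<in> E \<Longrightarrow> (y, x) \<notin> E"
    using dg unfolding directed_graph_def by auto
  have parts_eq: "parts (A, E) = A // rel" unfolding parts_def rel_def by simp
  have ex: "\<exists>i<n. z \<in> P i \<and> P i = rel `` {z}" if "z \<in> A" for z
  proof -
    have "rel `` {z} \<in> parts (A, E)" using that parts_eq by (simp add: quotientI)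
    then obtain i where "i < n" "rel `` {z} = P i" using partP by metis
    moreover have "z \<in> rel `` {z}" using eq that unfolding equiv_def refl_on_def by blast
    ultimately show ?thesis by auto
  qed
  have uniq: "i = j" if "i < n" "j < n" "z \<in> P i" "z \<in> P j" for i j z
    using disj that by blast
  show lab: "labf P n z < n \<and> z \<in> P (labf P n z)" if zA: "z \<in> A" for z
  proof -
    obtain i where "i < n" "z \<in> P i" using ex[OF zA] by blast
    then have "labf P n z = i" unfolding labf_def using uniq by blast
    then show ?thesis using \<open>i < n\<close> \<open>z \<in> P i\<close> by simp
  qed
  show labP: "z \<in> P i \<longleftrightarrow> labf P n z = i" if "z \<in> A" "i < n" for z i
    using lab[OF that(1)] uniq that by blast
  have labcls: "P (labf P n z) = rel `` {z}" if zA: "z \<in> A" for z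
  proof -
    obtain i where "i < n" "z \<in> P i" "P i = rel `` {z}" using ex[OF zA] by blast
    then show ?thesis using labP[OF zA \<open>i < n\<close>] by simp
  qed
  show "(x, y) \<notin> E" if "x \<in> A" "y \<in> A" "labf P n x = labf P n y" for x y
  proof -
    have "y \<in> rel `` {x}" using labcls[OF that(1)] lab[OF that(2)] that(3) by simp
    then have "nonadj E x y" unfolding rel_def by simp
    then show ?thesis using noloop unfolding nonadj_def by auto
  qed
  show "x \<noteq> y \<and> ((x, y) \<in> E \<longleftrightarrow> (y, x) \<notin> E)" if "x \<in> A" "y \<in> A" "labf P n x \<noteq> labf P n y" for x y
  proof -
    have "\<not> nonadj E x y"
    proof
      assume "nonadj E x y"
      then have "y \<in> rel `` {x}" unfolding rel_def using that by simp
      then have "y \<in> P (labf P n x)" using labcls[OF that(1)] by simp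
      then show False using labP[OF that(2)] lab[OF that(1)] that(3) by metis
    qed
    then show ?thesis using asym unfolding nonadj_def by auto
  qed
  have tr: "trans R" and irr: "irrefl R" and tot: "total_on A R"
    using slo unfolding strict_linear_order_on_def by auto
  show irr': "(x, x) \<notin> R" for x using irr unfolding irrefl_on_def by auto
  show tr': "(x, z) \<in> R" if "(x, y) \<in> R" "(y, z) \<in> R" for x y z
    using tr that unfolding trans_def by blast
  show "(x, y) \<in> R \<or> (y, x) \<in> R" if "x \<in> A" "y \<in> A" "x \<noteq> y" for x y
    using tot that unfolding total_on_def by blast
  show "R \<subseteq> A \<times> A" by (rule RA)
  show "(x, y) \<in> R \<longleftrightarrow> labf P n x < labf P n y"
    if "x \<in> A" "y \<in> A" "labf P n x \<noteq> labf P n y" for x y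
  proof (cases "labf P n x < labf P n y")
    case True
    then show ?thesis using Rord lab[OF that(1)] lab[OF that(2)] by blast
  next
    case False
    then have "labf P n y < labf P n x" using that(3) by simp
    then have "(y, x) \<in> R" using Rord lab[OF that(1)] lab[OF that(2)] by blast
    then have "(x, y) \<notin> R" using tr' irr' by blast
    then show ?thesis using False by simp
  qed
qed


definition mA :: "nat set \<Rightarrow> nat" where "mA A = Suc (Max (insert 0 A))"
definition Kc :: "nat set \<Rightarrow> nat" where "Kc A = Suc (Suc (mA A))"
definition K0 :: "nat \<Rightarrow> nat set \<Rightarrow> nat" where "K0 n A = n * Kc A"
definition WW :: "nat \<Rightarrow> nat set \<Rightarrow> nat" where "WW n A = 4 * K0 n A"
definition rr :: "nat set \<Rightarrow> nat" where "rr A = 2 * mA A * mA A"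
definition MM :: "nat \<Rightarrow> nat set \<Rightarrow> nat" where "MM n A = rr A * WW n A + 2 * rr A + 1"
definition NN :: "nat \<Rightarrow> nat set \<Rightarrow> nat" where
  "NN n A = (SOME N. partn_lst {..<N} (replicate (2^n) (MM n A)) (2 * rr A) \<and> rr A \<le> N)"
definition XX :: "nat \<Rightarrow> nat set \<Rightarrow> nat set set" where "XX n A = nsets {..<NN n A} (rr A)"
definition DD :: "nat \<Rightarrow> nat set \<Rightarrow> (nat \<times> nat set) set" where
  "DD n A = {(j, S). j < n \<and> S \<in> XX n A}"
definition ee :: "nat \<Rightarrow> nat set \<Rightarrow> nat \<times> nat set \<Rightarrow> nat" where
  "ee n A = (SOME e. bij_betw e (DD n A) {0..<card (DD n A)})"
definition Dis :: "nat \<Rightarrow> nat set \<Rightarrow> nat set \<Rightarrow> bool" where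
  "Dis r S T = (\<exists>q. 2*q+1 < r \<and>
     ((sorted_list_of_set S ! (2*q) < sorted_list_of_set T ! (2*q)) \<noteq>
      (sorted_list_of_set S ! (2*q+1) < sorted_list_of_set T ! (2*q+1))))"
definition edgeB :: "nat \<Rightarrow> nat \<times> nat set \<Rightarrow> nat \<times> nat set \<Rightarrow> bool" where
  "edgeB r u v = ((fst u < fst v \<and> Dis r (snd u) (snd v)) \<or> (fst v < fst u \<and> \<not> Dis r (snd v) (snd u)))"
definition BB :: "nat \<Rightarrow> nat set \<Rightarrow> dg" where
  "BB n A = (ee n A ` DD n A,
     {(ee n A u, ee n A v) | u v. u \<in> DD n A \<and> v \<in> DD n A \<and> edgeB (rr A) u v})"

lemma NN_prop: "partn_lst {..<NN n A} (replicate (2^n) (MM n A)) (2 * rr A) \<and> rr A \<le> NN n A"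
proof -
  obtain N0 :: nat where "partn_lst {..<N0} (replicate (2^n) (MM n A)) (2 * rr A)"
    using ramsey_full[of "replicate (2^n) (MM n A)" "2 * rr A"] by blast
  then have "partn_lst {..<max N0 (rr A)} (replicate (2^n) (MM n A)) (2 * rr A) \<and> rr A \<le> max N0 (rr A)"
    using partn_lst_greater_resource by (metis max.cobounded1 max.cobounded2)
  then show ?thesis unfolding NN_def by (rule someI)
qed

lemma DD_fin: "finite (DD n A)"
proof -
  have "DD n A \<subseteq> {..<n} \<times> XX n A" unfolding DD_def by auto
  moreover have "finite (XX n A)" unfolding XX_def by (simp add: finite_imp_finite_nsets)
  ultimately show ?thesis by (meson finite_SigmaI finite_lessThan finite_subset)
qed

lemma ee_inj: "inj_on (ee n A) (DD n A)"
proof -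
  have "\<exists>e. bij_betw e (DD n A) {0..<card (DD n A)}"
    using ex_bij_betw_finite_nat[OF DD_fin] by blast
  then have "bij_betw (ee n A) (DD n A) {0..<card (DD n A)}"
    unfolding ee_def by (rule someI_ex)
  then show ?thesis by (rule bij_betw_imp_inj_on)
qed

lemma edgeB_same: "fst u = fst v \<Longrightarrow> \<not> edgeB r u v"
  unfolding edgeB_def by auto

lemma edgeB_diff: "fst u \<noteq> fst v \<Longrightarrow> edgeB r u v \<longleftrightarrow> \<not> edgeB r v u"
  unfolding edgeB_def by auto

lemma BB_edge:
  assumes "u \<in> DD n A" "v \<in> DD n A"
  shows "(ee n A u, ee n A v) \<in> snd (BB n A) \<longleftrightarrow> edgeB (rr A) u v"
proof
  assume "(ee n A u, ee n A v) \<in> snd (BB n A)"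
  then obtain u' v' where "ee n A u = ee n A u'" "ee n A v = ee n A v'" "u' \<in> DD n A" "v' \<in> DD n A"
    "edgeB (rr A) u' v'" unfolding BB_def by auto
  then show "edgeB (rr A) u v" using ee_inj[of n A] assms by (metis inj_onD)
next
  assume "edgeB (rr A) u v" then show "(ee n A u, ee n A v) \<in> snd (BB n A)"
    unfolding BB_def using assms by (cases u; cases v) auto
qed

lemma BB_nonadj:
  assumes "u \<in> DD n A" "v \<in> DD n A"
  shows "nonadj (snd (BB n A)) (ee n A u) (ee n A v) \<longleftrightarrow> fst u = fst v"
proof (cases "u = v")
  case True then show ?thesis unfolding nonadj_def by simp
next
  case False
  then have "ee n A u \<noteq> ee n A v" using ee_inj[of n A] assms by (metis inj_onD)
  then show ?thesis unfolding nonadj_def using BB_edge[OF assms] BB_edge[OF assms(2,1)]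
    edgeB_same[of u v] edgeB_same[of v u] edgeB_diff[of u v] by auto
qed

lemma BB_K: "K n (BB n A)"
proof -
  define B where "B = ee n A ` DD n A"
  define F where "F = snd (BB n A)"
  have BBe: "BB n A = (B, F)" unfolding B_def F_def BB_def by simp
  have FB: "F \<subseteq> B \<times> B" unfolding F_def B_def BB_def by auto
  have dg: "directed_graph (B, F)"
    unfolding directed_graph_def
  proof (simp, intro conjI allI impI)
    show "F \<subseteq> B \<times> B" by (rule FB)
    fix x show "(x, x) \<notin> F"
    proof
      assume "(x, x) \<in> F"
      then obtain u where u: "u \<in> DD n A" "x = ee n A u" using FB unfolding B_def by auto
      then show False using \<open>(x, x) \<in> F\<close> BB_edge[OF u(1) u(1)] edgeB_same[of u u] F_def by auto
    qed
  next
    fix x y assume "(x, y) \<in> F"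
    then obtain u v where u: "u \<in> DD n A" "x = ee n A u" and v: "v \<in> DD n A" "y = ee n A v"
      using FB unfolding B_def by blast
    then have "edgeB (rr A) u v" using BB_edge \<open>(x, y) \<in> F\<close> F_def by auto
    then have "\<not> edgeB (rr A) v u" using edgeB_same edgeB_diff by metis
    then show "(y, x) \<notin> F" using BB_edge[OF v(1) u(1)] u v F_def by auto
  qed
  define rel where "rel = {(x, y). x \<in> B \<and> y \<in> B \<and> nonadj F x y}"
  have relc: "(ee n A u, ee n A v) \<in> rel \<longleftrightarrow> fst u = fst v" if "u \<in> DD n A" "v \<in> DD n A" for u v
    using BB_nonadj[OF that] that unfolding rel_def F_def B_def by auto
  have relB: "rel \<subseteq> B \<times> B" unfolding rel_def by auto
  have eqv: "equiv B rel"
  proof (rule equivI)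
    show "rel \<subseteq> B \<times> B" by (rule relB)
    show "refl_on B rel" unfolding refl_on_def using relB relc B_def by auto
    show "sym rel" unfolding sym_def
    proof (intro allI impI)
      fix x y assume "(x, y) \<in> rel"
      then obtain u v where "u \<in> DD n A" "x = ee n A u" "v \<in> DD n A" "y = ee n A v"
        using relB unfolding B_def by blast
      then show "(y, x) \<in> rel" using relc \<open>(x, y) \<in> rel\<close> by metis
    qed
    show "trans rel" unfolding trans_def
    proof (intro allI impI)
      fix x y z assume "(x, y) \<in> rel" "(y, z) \<in> rel"
      then obtain u v w where "u \<in> DD n A" "x = ee n A u" "v \<in> DD n A" "y = ee n A v"
        "w \<in> DD n A" "z = ee n A w"
        using relB unfolding B_def by blast
      then show "(x, z) \<in> rel" using relc \<open>(x, y) \<in> rel\<close> \<open>(y, z) \<in> rel\<close> by metis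
    qed
  qed
  have cm: "complete_multipartite (B, F)"
    unfolding complete_multipartite_def using dg eqv rel_def by simp
  have cls: "rel `` {ee n A u} = ee n A ` ({fst u} \<times> XX n A)" if "u \<in> DD n A" for u
  proof
    show "rel `` {ee n A u} \<subseteq> ee n A ` ({fst u} \<times> XX n A)"
    proof
      fix y assume "y \<in> rel `` {ee n A u}"
      then obtain v where v: "v \<in> DD n A" "y = ee n A v" using relB unfolding B_def by blast
      then have "fst v = fst u" using relc[OF that v(1)] \<open>y \<in> rel `` {ee n A u}\<close> by auto
      then show "y \<in> ee n A ` ({fst u} \<times> XX n A)" using v unfolding DD_def
        by (auto intro!: image_eqI[where x = v])
    qed
  next
    show "ee n A ` ({fst u} \<times> XX n A) \<subseteq> rel `` {ee n A u}"
    proof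
      fix y assume "y \<in> ee n A ` ({fst u} \<times> XX n A)"
      then obtain S where S: "S \<in> XX n A" "y = ee n A (fst u, S)" by auto
      have "(fst u, S) \<in> DD n A" using that S unfolding DD_def by auto
      then show "y \<in> rel `` {ee n A u}" using relc[OF that] S by auto
    qed
  qed
  have "parts (B, F) \<subseteq> (\<lambda>j. ee n A ` ({j} \<times> XX n A)) ` {..<n}"
  proof
    fix X assume "X \<in> parts (B, F)"
    then have "X \<in> B // rel" unfolding parts_def rel_def by simp
    then obtain x where "x \<in> B" "X = rel `` {x}" by (auto elim: quotientE)
    then obtain u where "u \<in> DD n A" "x = ee n A u" unfolding B_def by auto
    then show "X \<in> (\<lambda>j. ee n A ` ({j} \<times> XX n A)) ` {..<n}"
      using cls \<open>X = rel `` {x}\<close> unfolding DD_def by auto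
  qed
  then have "card (parts (B, F)) \<le> n"
    by (metis (no_types, lifting) card_image_le card_lessThan card_mono finite_imageI finite_lessThan le_trans)
  moreover have "finite B" unfolding B_def using DD_fin by simp
  ultimately show ?thesis unfolding K_def BBe using cm by simp
qed


lemma cmp_aux:
  fixes a0 a1 b k :: nat
  assumes "2*k \<le> a0" "a0 \<le> 2*k+1" "2*k \<le> a1" "a1 \<le> 2*k+1" "2 \<le> k" "b < 2*k \<or> 3*k \<le> b"
  shows "(a0 < b) = (a1 < b)" "(b < a0) = (b < a1)"
  using assms by linarith+

lemma main_embed:
  assumes n1: "1 \<le> n" and As: "Kstar n (A, E, P, R)" and Bs: "Kstar n (B, F, Q, U)" and BBe: "BB n A = (B, F)"
  shows "embeds n (A, E, P, R) (B, F, Q, U)"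
proof -
  define m where "m = mA A"
  define r where "r = rr A"
  define W where "W = WW n A"
  define k0 where "k0 = K0 n A"
  define kc where "kc = Kc A"
  define M where "M = MM n A"
  define N where "N = NN n A"
  define X where "X = XX n A"
  define D where "D = DD n A"
  define e where "e = ee n A"
  define sl where "sl = (sorted_list_of_set :: nat set \<Rightarrow> nat list)"
  have Be: "B = e ` D" and Fe: "F = snd (BB n A)" using BBe unfolding BB_def e_def D_def by auto
  have Fc: "(e u, e v) \<in> F \<longleftrightarrow> edgeB r u v" if "u \<in> D" "v \<in> D" for u v
    using BB_edge[of u n A v] that Fe unfolding D_def e_def r_def by simp
  have einj: "inj_on e D" unfolding e_def D_def by (rule ee_inj)
  have finA: "finite A" using kstar_fin[OF As] .
  have Am: "A \<subseteq> {..<m}"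
  proof
    fix x assume "x \<in> A"
    then have "x \<le> Max (insert 0 A)" using finA by simp
    then show "x \<in> {..<m}" unfolding m_def mA_def by simp
  qed
  have cardA: "card A \<le> m" using card_mono[OF _ Am] by simp
  have m1: "1 \<le> m" unfolding m_def mA_def by simp
  have kc_def': "kc = Suc (Suc m)" unfolding kc_def Kc_def m_def by simp
  have k0_def': "k0 = n * kc" unfolding k0_def K0_def kc_def by simp
  have W_def': "W = 4 * k0" unfolding W_def WW_def k0_def by simp
  have r_def': "r = 2 * m * m" unfolding r_def rr_def m_def by simp
  have M_def': "M = r * W + 2 * r + 1" unfolding M_def MM_def r_def W_def by simp
  have NNp: "partn_lst {..<N} (replicate (2^n) M) (2 * r)" "r \<le> N"
    using NN_prop[of n A] unfolding N_def M_def r_def by auto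
  have X_def': "X = nsets {..<N} r" unfolding X_def XX_def N_def r_def by simp
  have D_def': "D = {(j, S). j < n \<and> S \<in> X}" unfolding D_def DD_def X_def by simp
  define labA where "labA = labf P n"
  define labB where "labB = labf Q n"
  have S0X: "{..<r} \<in> X" unfolding X_def' nsets_def using NNp(2) by auto
  define S0 where "S0 = {..<r}"
  define lam where "lam j = labB (e (j, S0))" for j
  have eB: "e (j, S) \<in> B" if "j < n" "S \<in> X" for j S using that unfolding Be D_def' by auto
  have lamB: "labB (e (j, S)) = lam j" if "j < n" "S \<in> X" for j S
  proof (rule ccontr)
    assume "labB (e (j, S)) \<noteq> lam j"
    then have "(e (j, S), e (j, S0)) \<in> F \<or> (e (j, S0), e (j, S)) \<in> F"
      using kstar_diff[OF Bs eB[OF that] eB[OF that(1) S0X[folded S0_def]]] unfolding lam_def labB_def by blast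
    moreover have "(j, S) \<in> D" "(j, S0) \<in> D" using that S0X unfolding D_def' S0_def by auto
    ultimately show False using Fc edgeB_same by (metis fst_conv)
  qed
  have lam_lt: "lam j < n" if "j < n" for j
    using kstar_lab[OF Bs eB[OF that S0X[folded S0_def]]] unfolding lam_def labB_def by simp
  have lam_inj: "inj_on lam {..<n}"
  proof (rule inj_onI)
    fix j j' assume jj: "j \<in> {..<n}" "j' \<in> {..<n}" "lam j = lam j'"
    show "j = j'"
    proof (rule ccontr)
      assume "j \<noteq> j'"
      have DD: "(j, S0) \<in> D" "(j', S0) \<in> D" using jj S0X unfolding D_def' S0_def by auto
      then have "edgeB r (j, S0) (j', S0) \<or> edgeB r (j', S0) (j, S0)"
        using edgeB_diff[of "(j, S0)" "(j', S0)" r] \<open>j \<noteq> j'\<close> by auto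
      then have "(e (j, S0), e (j', S0)) \<in> F \<or> (e (j', S0), e (j, S0)) \<in> F" using Fc DD by auto
      then show False using kstar_same[OF Bs eB eB, of j S0 j' S0] kstar_same[OF Bs eB eB, of j' S0 j S0]
        jj S0X unfolding S0_def lam_def labB_def by auto
    qed
  qed
  have lam_surj: "lam ` {..<n} = {..<n}"
    using endo_inj_surj[OF _ _ lam_inj] lam_lt by auto
  define J where "J l = (SOME j. j < n \<and> lam j = l)" for l
  have J_prop: "J l < n \<and> lam (J l) = l" if "l < n" for l
  proof -
    have "\<exists>j. j < n \<and> lam j = l" using lam_surj that by (metis imageE lessThan_iff)
    then show ?thesis unfolding J_def by (rule someI_ex)
  qed
  define oddp where "oddp Z = (\<lambda>c. sl Z ! (2 * c)) ` {..<r}" for Z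
  define evenp where "evenp Z = (\<lambda>c. sl Z ! (2 * c + 1)) ` {..<r}" for Z
  define bitj where "bitj j Z = ((e (j, oddp Z), e (j, evenp Z)) \<in> U)" for j Z
  obtain g where g: "bij_betw g (Pow {..<n}) {0..<card (Pow {..<n :: nat})}"
    using ex_bij_betw_finite_nat[of "Pow {..<n :: nat}"] by auto
  define col where "col Z = g {j. j < n \<and> bitj j Z}" for Z
  have col_in: "col \<in> nsets {..<N} (2 * r) \<rightarrow> {..<length (replicate (2^n) M)}"
  proof
    fix Z
    have "{j. j < n \<and> bitj j Z} \<in> Pow {..<n}" by auto
    then have "col Z \<in> {0..<card (Pow {..<n :: nat})}" unfolding col_def using g bij_betwE by blast
    then show "col Z \<in> {..<length (replicate (2^n) M)}" by (simp add: card_Pow)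
  qed
  obtain ii H where ii: "ii < length (replicate (2^n) M)"
    and H: "H \<in> nsets {..<N} (replicate (2^n) M ! ii)" and Hc: "col ` nsets H (2 * r) \<subseteq> {ii}"
    by (rule partn_lstE[OF NNp(1) col_in refl])
  have HN: "H \<subseteq> {..<N}" and finH: "finite H" and cardH: "card H = M"
    using H ii unfolding nsets_def by auto
  define h where "h t = sl H ! t" for t
  have slH: "sorted_wrt (<) (sl H)" "length (sl H) = M" "set (sl H) = H"
    unfolding sl_def using finH cardH by auto
  have hH: "h t \<in> H" if "t < M" for t using slH that unfolding h_def by (metis nth_mem)
  have hmono: "h t < h t'" if "t < t'" "t' < M" for t t'
    using sorted_wrt_nth_less[OF slH(1) that(1)] slH(2) that unfolding h_def by simp
  have hmono_iff: "h t < h t' \<longleftrightarrow> t < t'" if "t < M" "t' < M" for t t'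
    using hmono that by (metis linorder_neqE_nat order_less_asym order_less_irrefl)
  have "nsets H (2 * r) \<noteq> {}" using cardH finH nsets_eq_empty_iff[of H "2*r"] M_def' by simp
  then obtain Zs where Zs: "Zs \<in> nsets H (2 * r)" by blast
  define d where "d j = bitj j Zs" for j
  have hom: "bitj j Z \<longleftrightarrow> d j" if "Z \<in> nsets H (2 * r)" "j < n" for Z j
  proof -
    have "col Z = col Zs" using Hc that(1) Zs by blast
    moreover have "{j. j < n \<and> bitj j Z} \<in> Pow {..<n}" "{j. j < n \<and> bitj j Zs} \<in> Pow {..<n}" by auto
    ultimately have "{j. j < n \<and> bitj j Z} = {j. j < n \<and> bitj j Zs}"
      unfolding col_def using bij_betw_imp_inj_on[OF g] inj_onD by metis
    then show ?thesis unfolding d_def using that(2) by blast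
  qed
  have Rirr: "\<And>x. (x, x) \<notin> R" using kstar_Rirr[OF As] .
  have Rtr: "\<And>x y z. (x, y) \<in> R \<Longrightarrow> (y, z) \<in> R \<Longrightarrow> (x, z) \<in> R" using kstar_Rtrans[OF As] .
  have Rtot: "\<And>x y. x \<in> A \<Longrightarrow> y \<in> A \<Longrightarrow> x \<noteq> y \<Longrightarrow> (x, y) \<in> R \<or> (y, x) \<in> R"
    using kstar_Rtot[OF As] .
  have labA_lt: "labA z < n" if "z \<in> A" for z using kstar_lab[OF As that] unfolding labA_def by simp
  define \<rho> where "\<rho> z = (if d (J (labA z)) then card {y \<in> A. labA y = labA z \<and> (y, z) \<in> R}
      else card {y \<in> A. labA y = labA z \<and> (z, y) \<in> R})" for z
  have \<rho>_lt: "\<rho> z < kc" if "z \<in> A" for z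
  proof -
    have "card {y \<in> A. labA y = labA z \<and> (y, z) \<in> R} \<le> card A"
      by (rule card_mono[OF finA]) blast
    moreover have "card {y \<in> A. labA y = labA z \<and> (z, y) \<in> R} \<le> card A"
      by (rule card_mono[OF finA]) blast
    ultimately show ?thesis unfolding \<rho>_def kc_def' using cardA by simp
  qed
  have \<rho>_mono: "(d (J (labA z)) \<longrightarrow> \<rho> z < \<rho> z') \<and> (\<not> d (J (labA z)) \<longrightarrow> \<rho> z' < \<rho> z)"
    if zA: "z \<in> A" and z'A: "z' \<in> A" and lz: "labA z = labA z'" and zR: "(z, z') \<in> R" for z z'
  proof (intro conjI impI)
    assume dd: "d (J (labA z))"
    define S1 where "S1 = {y \<in> A. labA y = labA z \<and> (y, z) \<in> R}"
    define S2 where "S2 = {y \<in> A. labA y = labA z' \<and> (y, z') \<in> R}"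
    have "S1 \<subseteq> S2"
    proof
      fix y assume "y \<in> S1"
      then have "y \<in> A" "labA y = labA z'" "(y, z) \<in> R" unfolding S1_def using lz by auto
      then show "y \<in> S2" unfolding S2_def using Rtr[OF _ zR] by blast
    qed
    moreover have "z \<in> S2" "z \<notin> S1" unfolding S1_def S2_def using zA lz zR Rirr by auto
    ultimately have "S1 \<subset> S2" by blast
    moreover have "finite S2" unfolding S2_def using finA by simp
    ultimately have "card S1 < card S2" by (rule psubset_card_mono[rotated])
    then show "\<rho> z < \<rho> z'" unfolding \<rho>_def S1_def S2_def using dd lz by simp
  next
    assume dd: "\<not> d (J (labA z))"
    define S1 where "S1 = {y \<in> A. labA y = labA z' \<and> (z', y) \<in> R}"
    define S2 where "S2 = {y \<in> A. labA y = labA z \<and> (z, y) \<in> R}"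
    have "S1 \<subseteq> S2"
    proof
      fix y assume "y \<in> S1"
      then have "y \<in> A" "labA y = labA z" "(z', y) \<in> R" unfolding S1_def using lz by auto
      then show "y \<in> S2" unfolding S2_def using Rtr[OF zR] by blast
    qed
    moreover have "z' \<in> S2" "z' \<notin> S1" unfolding S1_def S2_def using z'A lz zR Rirr by auto
    ultimately have "S1 \<subset> S2" by blast
    moreover have "finite S2" unfolding S2_def using finA by simp
    ultimately have "card S1 < card S2" by (rule psubset_card_mono[rotated])
    then show "\<rho> z' < \<rho> z" unfolding \<rho>_def S1_def S2_def using dd lz by simp
  qed
  have \<rho>_ne: "\<rho> z \<noteq> \<rho> z'" if "z \<in> A" "z' \<in> A" "labA z = labA z'" "z \<noteq> z'" for z z'
  proof
    assume eq: "\<rho> z = \<rho> z'"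
    have m1: "(d (J (labA z)) \<longrightarrow> \<rho> z < \<rho> z') \<and> (\<not> d (J (labA z)) \<longrightarrow> \<rho> z' < \<rho> z)"
      if "(z, z') \<in> R" using \<rho>_mono[OF \<open>z \<in> A\<close> \<open>z' \<in> A\<close> \<open>labA z = labA z'\<close> that] .
    have m2: "(d (J (labA z')) \<longrightarrow> \<rho> z' < \<rho> z) \<and> (\<not> d (J (labA z')) \<longrightarrow> \<rho> z < \<rho> z')"
      if "(z', z) \<in> R" using \<rho>_mono[OF \<open>z' \<in> A\<close> \<open>z \<in> A\<close> \<open>labA z = labA z'\<close>[symmetric] that] .
    show False
    proof (cases "(z, z') \<in> R")
      case True then show False using m1 eq by (cases "d (J (labA z))") simp_all
    next
      case False
      then have "(z', z) \<in> R" using Rtot[OF that(1,2,4)] by simp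
      then show False using m2 eq by (cases "d (J (labA z'))") simp_all
    qed
  qed
  define key0 where "key0 z = labA z * kc + \<rho> z" for z
  have key0_lt: "key0 z < k0" if "z \<in> A" for z
  proof -
    have "key0 z < labA z * kc + kc" unfolding key0_def using \<rho>_lt[OF that] by simp
    also have "\<dots> = Suc (labA z) * kc" by simp
    also have "\<dots> \<le> n * kc" using labA_lt[OF that] by (intro mult_le_mono1) simp
    finally show ?thesis unfolding k0_def' .
  qed
  have key0_mono: "key0 z < key0 z'" if "labA z = labA z'" "\<rho> z < \<rho> z'" for z z'
    unfolding key0_def using that by simp
  have k02: "2 \<le> k0"
  proof -
    have "2 \<le> kc" unfolding kc_def' by simp
    also have "kc \<le> n * kc" using mult_le_mono1[OF n1, of kc] by simp
    finally show ?thesis unfolding k0_def' .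
  qed
  define want where "want x y = ((x, y) \<in> E \<longleftrightarrow> J (labA x) < J (labA y))" for x y
  define cross where "cross x y = (x \<in> A \<and> y \<in> A \<and> labA x \<noteq> labA y)" for x y
  define flip where "flip x y = (cross x y \<and> x < y \<and> want x y)" for x y
  define keyv where "keyv x0 y0 sw z = (if cross x0 y0 then
      (if z = x0 then 2 * k0 + (if sw then 1 else 0)
       else if z = y0 then 2 * k0 + (if sw then 0 else 1)
       else if (labA z = labA x0 \<and> \<rho> z < \<rho> x0) \<or> (labA z = labA y0 \<and> \<rho> z < \<rho> y0) then k0 + key0 z
       else 3 * k0 + key0 z) else key0 z)" for x0 y0 sw z
  define key where "key c z = keyv (c div 2 div m) (c div 2 mod m)
      (c mod 2 = 1 \<and> flip (c div 2 div m) (c div 2 mod m)) z" for c z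
  have keyv_lt: "keyv x0 y0 sw z < W" if "z \<in> A" for x0 y0 sw z
    using key0_lt[OF that] k02 unfolding keyv_def W_def' by auto
  have keyv_mono: "keyv x0 y0 sw z < keyv x0 y0 sw z'"
    if "z \<in> A" "z' \<in> A" "labA z = labA z'" "\<rho> z < \<rho> z'" for x0 y0 sw z z'
  proof (cases "cross x0 y0")
    case False then show ?thesis unfolding keyv_def using key0_mono[OF that(3,4)] by simp
  next
    case True
    then have x0A: "x0 \<in> A" and y0A: "y0 \<in> A" and lxy: "labA x0 \<noteq> labA y0" unfolding cross_def by auto
    have b: "key0 z < k0" "key0 z' < k0" using key0_lt that by auto
    have km: "key0 z < key0 z'" using key0_mono[OF that(3,4)] .
    have zz: "z \<noteq> z'" using that(4) by auto
    have nx: "\<rho> w \<noteq> \<rho> x0" if "w \<in> A" "labA w = labA x0" "w \<noteq> x0" for w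
      using \<rho>_ne[OF that(1) x0A that(2,3)] .
    have ny: "\<rho> w \<noteq> \<rho> y0" if "w \<in> A" "labA w = labA y0" "w \<noteq> y0" for w
      using \<rho>_ne[OF that(1) y0A that(2,3)] .
    define G where "G w = ((labA w = labA x0 \<and> \<rho> w < \<rho> x0) \<or> (labA w = labA y0 \<and> \<rho> w < \<rho> y0))" for w
    have kx: "keyv x0 y0 sw x0 \<le> 2 * k0 + 1" "2 * k0 \<le> keyv x0 y0 sw x0" using True unfolding keyv_def by auto
    have ky: "keyv x0 y0 sw y0 \<le> 2 * k0 + 1" "2 * k0 \<le> keyv x0 y0 sw y0" using True lxy unfolding keyv_def by auto
    have kw: "keyv x0 y0 sw w = (if G w then k0 + key0 w else 3 * k0 + key0 w)" if "w \<noteq> x0" "w \<noteq> y0" for w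
      using True that unfolding keyv_def G_def by simp
    show ?thesis
    proof (cases "z = x0 \<or> z = y0")
      case True
      then have "z' \<noteq> x0" "z' \<noteq> y0" "\<not> G z'"
        using that lxy zz nx[OF that(2)] ny[OF that(2)] unfolding G_def by auto
      then show ?thesis using kw[of z'] kx ky True k02 by auto
    next
      case False
      show ?thesis
      proof (cases "z' = x0 \<or> z' = y0")
        case True
        then have "G z" using that unfolding G_def by auto
        then show ?thesis using kw[of z] False kx ky True b by auto
      next
        case False2: False
        have "G z' \<Longrightarrow> G z" using that unfolding G_def by auto
        then show ?thesis using kw[of z] kw[of z'] False False2 km by auto
      qed
    qed
  qed
  have kv_out: "keyv x0 y0 sw w = keyv x0 y0 False w" if "w \<noteq> x0" "w \<noteq> y0" for x0 y0 sw w
    using that unfolding keyv_def by simp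
  have kv_range: "keyv x0 y0 sw w < 2 * k0 \<or> 3 * k0 \<le> keyv x0 y0 sw w"
    if "cross x0 y0" "w \<in> A" "w \<noteq> x0" "w \<noteq> y0" for x0 y0 sw w
    using that key0_lt[OF that(2)] unfolding keyv_def by auto
  have kv_in: "2 * k0 \<le> keyv x0 y0 sw w \<and> keyv x0 y0 sw w \<le> 2 * k0 + 1"
    if "cross x0 y0" "w = x0 \<or> w = y0" for x0 y0 sw w
    using that unfolding keyv_def cross_def by auto
  have kv_agree: "(keyv x0 y0 False u < keyv x0 y0 False v) = (keyv x0 y0 True u < keyv x0 y0 True v)"
    if cr: "cross x0 y0" and uA: "u \<in> A" and vA: "v \<in> A" and n1: "\<not> (u = x0 \<and> v = y0)"
      and n2: "\<not> (u = y0 \<and> v = x0)" for x0 y0 u v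
  proof (cases "u = x0 \<or> u = y0")
    case True
    show ?thesis
    proof (cases "v = x0 \<or> v = y0")
      case True
      then have "u = v" using \<open>u = x0 \<or> u = y0\<close> n1 n2 by blast
      then show ?thesis by simp
    next
      case False
      then have e: "keyv x0 y0 True v = keyv x0 y0 False v" using kv_out[of v x0 y0 True] by blast
      have rg: "keyv x0 y0 False v < 2 * k0 \<or> 3 * k0 \<le> keyv x0 y0 False v"
        using kv_range[OF cr vA] False by blast
      have i0: "2 * k0 \<le> keyv x0 y0 False u \<and> keyv x0 y0 False u \<le> 2 * k0 + 1" by (rule kv_in[OF cr True])
      have i1: "2 * k0 \<le> keyv x0 y0 True u \<and> keyv x0 y0 True u \<le> 2 * k0 + 1" by (rule kv_in[OF cr True])
      show ?thesis unfolding e using cmp_aux(1)[OF i0[THEN conjunct1] i0[THEN conjunct2] i1[THEN conjunct1] i1[THEN conjunct2] k02 rg] .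
    qed
  next
    case False
    then have ku: "keyv x0 y0 True u = keyv x0 y0 False u" using kv_out[of u x0 y0 True] by blast
    have ru: "keyv x0 y0 False u < 2 * k0 \<or> 3 * k0 \<le> keyv x0 y0 False u"
      using kv_range[OF cr uA] False by blast
    show ?thesis
    proof (cases "v = x0 \<or> v = y0")
      case True
      have i0: "2 * k0 \<le> keyv x0 y0 False v \<and> keyv x0 y0 False v \<le> 2 * k0 + 1" by (rule kv_in[OF cr True])
      have i1: "2 * k0 \<le> keyv x0 y0 True v \<and> keyv x0 y0 True v \<le> 2 * k0 + 1" by (rule kv_in[OF cr True])
      show ?thesis unfolding ku using cmp_aux(2)[OF i0[THEN conjunct1] i0[THEN conjunct2] i1[THEN conjunct1] i1[THEN conjunct2] k02 ru] .
    next
      case F2: False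
      then have "keyv x0 y0 True v = keyv x0 y0 False v" using kv_out[of v x0 y0 True] by blast
      then show ?thesis using ku by simp
    qed
  qed
  have key_even: "key (2 * q) z = keyv (q div m) (q mod m) False z" for q z
    unfolding key_def by simp
  have key_odd: "key (2 * q + 1) z = keyv (q div m) (q mod m) (flip (q div m) (q mod m)) z" for q z
    unfolding key_def by simp
  have DisK: "(\<exists>q < m * m. (key (2 * q) u < key (2 * q) v) \<noteq> (key (2 * q + 1) u < key (2 * q + 1) v))
      \<longleftrightarrow> flip u v \<or> flip v u" if uA: "u \<in> A" and vA: "v \<in> A" for u v
  proof
    assume "\<exists>q < m * m. (key (2 * q) u < key (2 * q) v) \<noteq> (key (2 * q + 1) u < key (2 * q + 1) v)"
    then obtain q where q: "q < m * m" and dq: "(key (2 * q) u < key (2 * q) v) \<noteq> (key (2 * q + 1) u < key (2 * q + 1) v)"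
      by blast
    define x0 where "x0 = q div m"
    define y0 where "y0 = q mod m"
    have dq': "(keyv x0 y0 False u < keyv x0 y0 False v) \<noteq> (keyv x0 y0 (flip x0 y0) u < keyv x0 y0 (flip x0 y0) v)"
      using dq unfolding key_even key_odd x0_def y0_def .
    then have fl: "flip x0 y0" by (cases "flip x0 y0") auto
    then have cr: "cross x0 y0" unfolding flip_def by simp
    have "(u = x0 \<and> v = y0) \<or> (u = y0 \<and> v = x0)"
      using kv_agree[OF cr uA vA] dq' fl by auto
    then show "flip u v \<or> flip v u" using fl by auto
  next
    have dis: "(keyv x0 y0 False u < keyv x0 y0 False v) \<noteq> (keyv x0 y0 True u < keyv x0 y0 True v)"
      if "flip x0 y0" "(u = x0 \<and> v = y0) \<or> (u = y0 \<and> v = x0)" for x0 y0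
    proof -
      have "x0 \<noteq> y0" using that(1) unfolding flip_def cross_def by auto
      then show ?thesis using that(1,2) unfolding keyv_def flip_def by auto
    qed
    have mm: "a * m + b < m * m" "(a * m + b) div m = a" "(a * m + b) mod m = b" if "a < m" "b < m" for a b
    proof -
      have "a * m + b < a * m + m" using that by simp
      also have "\<dots> = Suc a * m" by simp
      also have "\<dots> \<le> m * m" using that by (intro mult_le_mono1) simp
      finally show "a * m + b < m * m" .
      show "(a * m + b) div m = a" "(a * m + b) mod m = b" using that by auto
    qed
    have um: "u < m" "v < m" using Am uA vA by auto
    assume "flip u v \<or> flip v u"
    then show "\<exists>q < m * m. (key (2 * q) u < key (2 * q) v) \<noteq> (key (2 * q + 1) u < key (2 * q + 1) v)"
    proof
      assume f: "flip u v"
      show ?thesis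
        apply (rule exI[of _ "u * m + v"])
        using mm[OF um] dis[of u v] f unfolding key_even key_odd by simp
    next
      assume f: "flip v u"
      show ?thesis
        apply (rule exI[of _ "v * m + u"])
        using mm[OF um(2,1)] dis[of v u] f unfolding key_even key_odd by simp
    qed
  qed
  have key_lt: "key c z < W" if "z \<in> A" for c z unfolding key_def using keyv_lt[OF that] .
  have key_mono: "key c z < key c z'" if "z \<in> A" "z' \<in> A" "labA z = labA z'" "\<rho> z < \<rho> z'" for c z z'
    unfolding key_def using keyv_mono[OF that] .
  define \<phi> where "\<phi> z c = h (c * W + key c z)" for z c
  have pos_lt: "c * W + key c z < M" if "z \<in> A" "c < r" for z c
  proof -
    have "c * W + key c z < c * W + W" using key_lt[OF that(1)] by simp
    also have "\<dots> = Suc c * W" by simp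
    also have "\<dots> \<le> r * W" using that(2) by (intro mult_le_mono1) simp
    finally show ?thesis unfolding M_def' by simp
  qed
  have pos_mono: "i * W + key i z < j * W + key j z'" if "z \<in> A" "i < j" for z z' i j
  proof -
    have "i * W + key i z < i * W + W" using key_lt[OF that(1)] by simp
    also have "\<dots> = Suc i * W" by simp
    also have "\<dots> \<le> j * W" using that(2) by (intro mult_le_mono1) simp
    finally show ?thesis by simp
  qed
  have \<phi>_mono: "\<phi> z i < \<phi> z j" if "z \<in> A" "i < j" "j < r" for z i j
    unfolding \<phi>_def using hmono pos_mono[OF that(1,2)] pos_lt[OF that(1,3)] by blast
  define Sx where "Sx z = \<phi> z ` {..<r}" for z
  have slSx: "sl (Sx z) = map (\<phi> z) [0..<r]" if "z \<in> A" for z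
    unfolding Sx_def sl_def using sl_image[of r "\<phi> z"] \<phi>_mono[OF that] by blast
  have Sx_X: "Sx z \<in> X" if "z \<in> A" for z
  proof -
    have "Sx z \<subseteq> H" unfolding Sx_def \<phi>_def using hH pos_lt[OF that] by auto
    moreover have "card (Sx z) = r" unfolding Sx_def
      using card_image[OF sl_image_inj[of r "\<phi> z"]] \<phi>_mono[OF that] by auto
    moreover have "finite (Sx z)" unfolding Sx_def by simp
    ultimately show ?thesis unfolding X_def' nsets_def using HN by auto
  qed
  have \<phi>_cmp: "\<phi> u c < \<phi> v c \<longleftrightarrow> key c u < key c v" if "u \<in> A" "v \<in> A" "c < r" for u v c
    unfolding \<phi>_def using hmono_iff[OF pos_lt[OF that(1,3)] pos_lt[OF that(2,3)]] by simp
  have Dis_Sx: "Dis r (Sx u) (Sx v) \<longleftrightarrow> flip u v \<or> flip v u" if uA: "u \<in> A" and vA: "v \<in> A" for u v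
  proof -
    have nth: "sorted_list_of_set (Sx w) ! i = \<phi> w i" if "w \<in> A" "i < r" for w i
      using slSx[OF that(1)] that(2) unfolding sl_def by simp
    have pt: "((sorted_list_of_set (Sx u) ! (2 * q) < sorted_list_of_set (Sx v) ! (2 * q)) \<noteq>
             (sorted_list_of_set (Sx u) ! (2 * q + 1) < sorted_list_of_set (Sx v) ! (2 * q + 1)))
       \<longleftrightarrow> ((key (2 * q) u < key (2 * q) v) \<noteq> (key (2 * q + 1) u < key (2 * q + 1) v))"
      if q: "2 * q + 1 < r" for q
    proof -
      have q0: "2 * q < r" using q by simp
      show ?thesis using nth[OF uA q0] nth[OF vA q0] nth[OF uA q] nth[OF vA q]
        \<phi>_cmp[OF uA vA q0] \<phi>_cmp[OF uA vA q] by simp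
    qed
    have qr: "2 * q + 1 < r \<longleftrightarrow> q < m * m" for q
    proof -
      have "r = 2 * (m * m)" unfolding r_def' by simp
      moreover have "\<And>mm::nat. (2 * q + 1 < 2 * mm) = (q < mm)" by presburger
      ultimately show ?thesis by simp
    qed
    have "Dis r (Sx u) (Sx v) \<longleftrightarrow>
        (\<exists>q < m * m. (key (2 * q) u < key (2 * q) v) \<noteq> (key (2 * q + 1) u < key (2 * q + 1) v))"
    proof
      assume "Dis r (Sx u) (Sx v)"
      then obtain q where q: "2 * q + 1 < r" and
        dq: "(sorted_list_of_set (Sx u) ! (2 * q) < sorted_list_of_set (Sx v) ! (2 * q)) \<noteq>
             (sorted_list_of_set (Sx u) ! (2 * q + 1) < sorted_list_of_set (Sx v) ! (2 * q + 1))"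
        unfolding Dis_def by blast
      show "\<exists>q < m * m. (key (2 * q) u < key (2 * q) v) \<noteq> (key (2 * q + 1) u < key (2 * q + 1) v)"
        using pt[OF q] dq q qr by blast
    next
      assume "\<exists>q < m * m. (key (2 * q) u < key (2 * q) v) \<noteq> (key (2 * q + 1) u < key (2 * q + 1) v)"
      then obtain q where q: "q < m * m" and dq: "(key (2 * q) u < key (2 * q) v) \<noteq> (key (2 * q + 1) u < key (2 * q + 1) v)"
        by blast
      have q': "2 * q + 1 < r" using q qr by simp
      show "Dis r (Sx u) (Sx v)" unfolding Dis_def using pt[OF q'] dq q' by blast
    qed
    then show ?thesis using DisK[OF uA vA] by simp
  qed
  define f where "f z = e (J (labA z), Sx z)" for z
  have JL: "J (labA z) < n \<and> lam (J (labA z)) = labA z" if "z \<in> A" for z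
    using J_prop[OF labA_lt[OF that]] .
  have fD: "(J (labA z), Sx z) \<in> D" if "z \<in> A" for z
    using JL[OF that] Sx_X[OF that] unfolding D_def' by simp
  have fB: "f z \<in> B" if "z \<in> A" for z unfolding f_def using fD[OF that] Be by simp
  have labBf: "labB (f z) = labA z" if "z \<in> A" for z
    unfolding f_def using lamB[OF JL[OF that, THEN conjunct1] Sx_X[OF that]] JL[OF that] by simp
  have r0: "0 < r" unfolding r_def' using m1 by simp
  have Zlem: "(f u, f v) \<in> U \<longleftrightarrow> d (J (labA u))"
    if uA: "u \<in> A" and vA: "v \<in> A" and luv: "labA u = labA v" and ruv: "\<rho> u < \<rho> v" for u v
  proof -
    define j where "j = J (labA u)"
    have jn: "j < n" unfolding j_def using JL[OF uA] by simp
    define ar where "ar t = (if even t then key (t div 2) u else key (t div 2) v)" for t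
    have ar_lt: "ar t < W" for t unfolding ar_def using key_lt[OF uA] key_lt[OF vA] by simp
    define \<psi> where "\<psi> t = h ((t div 2) * W + ar t)" for t
    have arg_lt: "(t div 2) * W + ar t < M" if "t < 2 * r" for t
    proof -
      have "t div 2 < r" using that by simp
      then show ?thesis unfolding ar_def using pos_lt[OF uA] pos_lt[OF vA] by simp
    qed
    have \<psi>_mono: "\<psi> t < \<psi> t'" if "t < t'" "t' < 2 * r" for t t'
    proof -
      have "(t div 2) * W + ar t < (t' div 2) * W + ar t'"
      proof (cases "t div 2 = t' div 2")
        case True
        then have "even t" "t' = Suc t" using that(1) by presburger+
        then have "ar t = key (t div 2) u" "ar t' = key (t div 2) v" unfolding ar_def using True by auto
        then show ?thesis using key_mono[OF uA vA luv ruv] True by simp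
      next
        case False
        then have lt: "t div 2 < t' div 2" using that(1) by (meson div_le_mono le_neq_implies_less less_imp_le_nat)
        have "(t div 2) * W + ar t < (t div 2) * W + W" using ar_lt[of t] by simp
        also have "\<dots> = Suc (t div 2) * W" by simp
        also have "\<dots> \<le> (t' div 2) * W" using lt by (intro mult_le_mono1) simp
        finally show ?thesis by simp
      qed
      then show ?thesis unfolding \<psi>_def using hmono arg_lt[OF that(2)] by blast
    qed
    define Z where "Z = \<psi> ` {..<2 * r}"
    have \<psi>e: "\<psi> (2 * c) = \<phi> u c" for c unfolding \<psi>_def \<phi>_def ar_def by simp
    have \<psi>o: "\<psi> (2 * c + 1) = \<phi> v c" for c unfolding \<psi>_def \<phi>_def ar_def by simp
    have slZ: "sl Z = map \<psi> [0..<2 * r]" unfolding Z_def sl_def using sl_image[of "2 * r" \<psi>] \<psi>_mono by blast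
    have oZ: "oddp Z = Sx u"
    proof -
      have "oddp Z = (\<lambda>c. \<psi> (2 * c)) ` {..<r}" unfolding oddp_def slZ by (intro image_cong) auto
      then show ?thesis unfolding Sx_def \<psi>e by simp
    qed
    have eZ: "evenp Z = Sx v"
    proof -
      have "evenp Z = (\<lambda>c. \<psi> (2 * c + 1)) ` {..<r}" unfolding evenp_def slZ by (intro image_cong) auto
      then show ?thesis unfolding Sx_def \<psi>o by simp
    qed
    have ZH: "Z \<in> nsets H (2 * r)"
    proof -
      have "Z \<subseteq> H" unfolding Z_def \<psi>_def using hH arg_lt by auto
      moreover have "card Z = 2 * r" unfolding Z_def
        using card_image[OF sl_image_inj[of "2 * r" \<psi>]] \<psi>_mono by auto
      moreover have "finite Z" unfolding Z_def by simp
      ultimately show ?thesis unfolding nsets_def by auto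
    qed
    have "bitj j Z \<longleftrightarrow> d j" using hom[OF ZH jn] .
    moreover have "bitj j Z \<longleftrightarrow> (f u, f v) \<in> U"
      unfolding bitj_def oZ eZ f_def j_def using luv by simp
    ultimately show ?thesis unfolding j_def by simp
  qed
  have Uirr: "\<And>x. (x, x) \<notin> U" using kstar_Rirr[OF Bs] .
  have Utr: "\<And>x y z. (x, y) \<in> U \<Longrightarrow> (y, z) \<in> U \<Longrightarrow> (x, z) \<in> U" using kstar_Rtrans[OF Bs] .
  have Utot: "\<And>x y. x \<in> B \<Longrightarrow> y \<in> B \<Longrightarrow> x \<noteq> y \<Longrightarrow> (x, y) \<in> U \<or> (y, x) \<in> U"
    using kstar_Rtot[OF Bs] .
  have finj: "inj_on f A"
  proof (rule inj_onI)
    fix x y assume xA: "x \<in> A" and yA: "y \<in> A" and fxy: "f x = f y"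
    then have pe: "(J (labA x), Sx x) = (J (labA y), Sx y)"
      using einj fD[OF xA] fD[OF yA] unfolding f_def by (meson inj_onD)
    then have "labA x = labA y" using JL[OF xA] JL[OF yA] by (metis prod.inject)
    show "x = y"
    proof (rule ccontr)
      assume "x \<noteq> y"
      then have "\<rho> x \<noteq> \<rho> y" using \<rho>_ne xA yA \<open>labA x = labA y\<close> by blast
      then have "key 0 x \<noteq> key 0 y"
        using key_mono[OF xA yA \<open>labA x = labA y\<close>] key_mono[OF yA xA \<open>labA x = labA y\<close>[symmetric]]
        by (metis linorder_neqE_nat order_less_irrefl)
      then have "\<phi> x 0 \<noteq> \<phi> y 0" using \<phi>_cmp[OF xA yA r0] \<phi>_cmp[OF yA xA r0] by auto
      moreover have "sl (Sx x) ! 0 = \<phi> x 0" "sl (Sx y) ! 0 = \<phi> y 0"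
        using slSx[OF xA] slSx[OF yA] r0 by auto
      ultimately show False using pe by auto
    qed
  qed
  have Rpres: "(x, y) \<in> R \<longleftrightarrow> (f x, f y) \<in> U" if xA: "x \<in> A" and yA: "y \<in> A" for x y
  proof (cases "labA x = labA y")
    case False
    have "(x, y) \<in> R \<longleftrightarrow> labA x < labA y" using kstar_Rlab[OF As xA yA] False unfolding labA_def by simp
    moreover have "(f x, f y) \<in> U \<longleftrightarrow> labB (f x) < labB (f y)"
      using kstar_Rlab[OF Bs fB[OF xA] fB[OF yA]] False labBf[OF xA] labBf[OF yA] unfolding labB_def by simp
    ultimately show ?thesis using labBf[OF xA] labBf[OF yA] by simp
  next
    case True
    show ?thesis
    proof (cases "x = y")
      case True then show ?thesis using Rirr Uirr by simp
    next
      case False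
      have fne: "f x \<noteq> f y" using finj xA yA False by (meson inj_onD)
      have rne: "\<rho> x \<noteq> \<rho> y" using \<rho>_ne xA yA True False by blast
      have dd: "d (J (labA y)) = d (J (labA x))" using True by simp
      show ?thesis
      proof (cases "\<rho> x < \<rho> y")
        case lt: True
        have Z: "(f x, f y) \<in> U \<longleftrightarrow> d (J (labA x))" using Zlem[OF xA yA True lt] .
        have my: "(d (J (labA y)) \<longrightarrow> \<rho> y < \<rho> x) \<and> (\<not> d (J (labA y)) \<longrightarrow> \<rho> x < \<rho> y)"
          if "(y, x) \<in> R" using \<rho>_mono[OF yA xA True[symmetric] that] .
        have mx: "(d (J (labA x)) \<longrightarrow> \<rho> x < \<rho> y) \<and> (\<not> d (J (labA x)) \<longrightarrow> \<rho> y < \<rho> x)"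
          if "(x, y) \<in> R" using \<rho>_mono[OF xA yA True that] .
        show ?thesis
        proof (cases "d (J (labA x))")
          case dT: True
          then have "(y, x) \<notin> R" using my lt dd by auto
          then have "(x, y) \<in> R" using Rtot[OF xA yA False] by blast
          then show ?thesis using Z dT by simp
        next
          case dF: False
          then have "(x, y) \<notin> R" using mx lt by auto
          then show ?thesis using Z dF by simp
        qed
      next
        case ge: False
        then have lt: "\<rho> y < \<rho> x" using rne by simp
        have Z: "(f y, f x) \<in> U \<longleftrightarrow> d (J (labA y))" using Zlem[OF yA xA True[symmetric] lt] .
        have my: "(d (J (labA y)) \<longrightarrow> \<rho> y < \<rho> x) \<and> (\<not> d (J (labA y)) \<longrightarrow> \<rho> x < \<rho> y)"
          if "(y, x) \<in> R" using \<rho>_mono[OF yA xA True[symmetric] that] .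
        have mx: "(d (J (labA x)) \<longrightarrow> \<rho> x < \<rho> y) \<and> (\<not> d (J (labA x)) \<longrightarrow> \<rho> y < \<rho> x)"
          if "(x, y) \<in> R" using \<rho>_mono[OF xA yA True that] .
        show ?thesis
        proof (cases "d (J (labA x))")
          case dT: True
          then have "(x, y) \<notin> R" using mx lt by auto
          moreover have "(f x, f y) \<notin> U" using Z dT dd Utr Uirr by blast
          ultimately show ?thesis by simp
        next
          case dF: False
          then have "(y, x) \<notin> R" using my lt dd by auto
          then have "(x, y) \<in> R" using Rtot[OF xA yA False] by blast
          moreover have "(f x, f y) \<in> U" using Z dF dd Utot[OF fB[OF xA] fB[OF yA] fne] by auto
          ultimately show ?thesis by simp
        qed
      qed
    qed
  qed
  have Epres: "(x, y) \<in> E \<longleftrightarrow> (f x, f y) \<in> F" if xA: "x \<in> A" and yA: "y \<in> A" for x y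
  proof -
    have fe: "(f x, f y) \<in> F \<longleftrightarrow> edgeB r (J (labA x), Sx x) (J (labA y), Sx y)"
      unfolding f_def using Fc[OF fD[OF xA] fD[OF yA]] .
    show ?thesis
    proof (cases "labA x = labA y")
      case True
      then show ?thesis using fe edgeB_same[of "(J (labA x), Sx x)" "(J (labA y), Sx y)" r]
        kstar_same[OF As xA yA] unfolding labA_def by simp
    next
      case False
      have jne: "J (labA x) \<noteq> J (labA y)" using JL[OF xA] JL[OF yA] False by metis
      have cr: "cross x y" "cross y x" unfolding cross_def using xA yA False by auto
      have dxy: "x \<noteq> y \<and> ((x, y) \<in> E \<longleftrightarrow> (y, x) \<notin> E)" using kstar_diff[OF As xA yA] False
        unfolding labA_def by simp
      have D1: "Dis r (Sx x) (Sx y) \<longleftrightarrow> flip x y \<or> flip y x" using Dis_Sx[OF xA yA] .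
      have D2: "Dis r (Sx y) (Sx x) \<longleftrightarrow> flip x y \<or> flip y x" using Dis_Sx[OF yA xA] by blast
      have fl: "flip x y \<longleftrightarrow> x < y \<and> ((x, y) \<in> E \<longleftrightarrow> J (labA x) < J (labA y))"
        "flip y x \<longleftrightarrow> y < x \<and> ((y, x) \<in> E \<longleftrightarrow> J (labA y) < J (labA x))"
        unfolding flip_def want_def using cr by auto
      show ?thesis unfolding fe edgeB_def fst_conv snd_conv D1 D2 fl using jne dxy
        by (cases "x < y"; cases "J (labA x) < J (labA y)") auto
    qed
  qed
  have Ppres: "x \<in> P i \<longleftrightarrow> f x \<in> Q i" if xA: "x \<in> A" and i: "i < n" for x i
    using kstar_labP[OF As xA i] kstar_labP[OF Bs fB[OF xA] i] labBf[OF xA] unfolding labA_def labB_def by simp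
  show ?thesis
    unfolding embeds_def
    apply simp
    apply (rule exI[of _ f])
    using finj fB Rpres Epres Ppres by blast
qed

theorem theorem8p6:
  fixes n :: nat
  assumes "n \<ge> 1"
  shows "expansion_property (K n) (Kstar n) reduct (embeds n)"
  unfolding expansion_property_def
proof (intro allI impI)
  fix G assume "K n G"
  obtain A E0 where G: "G = (A, E0)" by (cases G)
  show "\<exists>B. K n B \<and> (\<forall>As Bs. Kstar n As \<longrightarrow> Kstar n Bs \<longrightarrow> reduct As = G \<longrightarrow> reduct Bs = B \<longrightarrow> embeds n As Bs)"
  proof (intro exI[of _ "BB n A"] conjI allI impI)
    show "K n (BB n A)" by (rule BB_K)
    fix As Bs assume h: "Kstar n As" "Kstar n Bs" "reduct As = G" "reduct Bs = BB n A"
    obtain A' E P R where As: "As = (A', E, P, R)" by (cases As)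
    obtain B F Q U where Bs: "Bs = (B, F, Q, U)" by (cases Bs)
    have "A' = A" using h(3) G As unfolding reduct_def by simp
    moreover have "BB n A = (B, F)" using h(4) Bs unfolding reduct_def by simp
    ultimately show "embeds n As Bs"
      using main_embed[OF assms, of A E P R B F Q U] h(1,2) As Bs by simp
  qed
qed

end
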